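(* Let $x_0<\dots<x_n$ and $\hat x_0<\dots<\hat x_n$ be real numbers with $\hat x_0=x_0$, $\hat x_n=x_n$, let $z_k=z_k(\mathbf{x},\hat{\mathbf{x}})$, $\hat c_k:=(\hat x_{k-1}+\hat x_k)/2$, and for $1\le k\le n$, $0\le j\le n$ let $a_{k,j}:=(z_j-P_{\mathbf{z}}(\hat c_k))\,\ell_j(\hat c_k)$. Let $L\ge0$ and let $\mathbf{y}\in\mathbb{R}^{n+1}$ satisfy $|y_j-y_{j-1}|\le L(\hat x_j-\hat x_{j-1})$ for $1\le j\le n$. Then for each $1\le k\le n$, \[ |E(\hat c_k;\mathbf{y},\mathbf{z})|\le L\sum_{i=1}^n(\hat x_i-\hat x_{i-1})\Bigl|\sum_{j=i}^n a_{k,j}\Bigr|. \]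
   Context: $\lambda_k(\mathbf{x}):=1/\prod_{j\neq k}(x_k-x_j)$; $z_k(\mathbf{x},\hat{\mathbf{x}}):=(\lambda_k(\mathbf{x})-\lambda_k(\hat{\mathbf{x}}))/\lambda_k(\hat{\mathbf{x}})$. $\ell_j$ is the $j$-th Lagrange polynomial for the nodes $\hat{\mathbf{x}}$. For $\mathbf{v}\in\mathbb{R}^{n+1}$, $P_{\mathbf{v}}$ is the polynomial of degree $\le n$ with $P_{\mathbf{v}}(\hat x_k)=v_k$; $E(t;\mathbf{y},\mathbf{z}):=P_{\mathbf{y}\mathbf{z}}(t)-P_{\mathbf{y}}(t)P_{\mathbf{z}}(t)$ with $(\mathbf{yz})_k=y_kz_k$. *)

theory Defs
  imports Complex_Main
begin

text \<open>Nodes are functions nat \<Rightarrow> real, only indices 0..n are relevant.\<close>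

definition lam :: "nat \<Rightarrow> (nat \<Rightarrow> real) \<Rightarrow> nat \<Rightarrow> real" where
  "lam n x k = 1 / (\<Prod>j\<in>{0..n} - {k}. (x k - x j))"

definition zz :: "nat \<Rightarrow> (nat \<Rightarrow> real) \<Rightarrow> (nat \<Rightarrow> real) \<Rightarrow> nat \<Rightarrow> real" where
  "zz n x xh k = (lam n x k - lam n xh k) / lam n xh k"

definition lagr :: "nat \<Rightarrow> (nat \<Rightarrow> real) \<Rightarrow> nat \<Rightarrow> real \<Rightarrow> real" where
  "lagr n xh j t = (\<Prod>i\<in>{0..n} - {j}. (t - xh i) / (xh j - xh i))"

definition Pint :: "nat \<Rightarrow> (nat \<Rightarrow> real) \<Rightarrow> (nat \<Rightarrow> real) \<Rightarrow> real \<Rightarrow> real" where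
  "Pint n xh v t = (\<Sum>j=0..n. v j * lagr n xh j t)"

definition Eint :: "nat \<Rightarrow> (nat \<Rightarrow> real) \<Rightarrow> real \<Rightarrow> (nat \<Rightarrow> real) \<Rightarrow> (nat \<Rightarrow> real) \<Rightarrow> real" where
  "Eint n xh t y z = Pint n xh (\<lambda>k. y k * z k) t - Pint n xh y t * Pint n xh z t"

end

theory Submission imports Defs "HOL-Computational_Algebra.Polynomial" begin

lemma tele: "(\<Sum>i=1..(m::nat). (y i - y (i - 1))) = (y m - y 0 :: real)"
  by (induction m) auto

lemma abel: "(\<Sum>j=0..(m::nat). y j * a j) = y 0 * (\<Sum>j=0..m. a j) + (\<Sum>i=1..m. (y i - y (i - 1)) * (\<Sum>j=i..m. a j :: real))"
proof (induction m)
  case 0 then show ?case by simp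
next
  case (Suc m)
  have s: "(\<Sum>i=1..Suc m. (y i - y (i - 1)) * (\<Sum>j=i..Suc m. a j))
     = (\<Sum>i=1..m. (y i - y (i - 1)) * (\<Sum>j=i..m. a j)) + (\<Sum>i=1..Suc m. (y i - y (i - 1))) * a (Suc m)"
  proof -
    have "(\<Sum>i=1..Suc m. (y i - y (i - 1)) * (\<Sum>j=i..Suc m. a j))
      = (\<Sum>i=1..Suc m. (y i - y (i - 1)) * (\<Sum>j=i..m. a j) + (y i - y (i - 1)) * a (Suc m))"
      by (intro sum.cong) (auto simp: algebra_simps)
    also have "\<dots> = (\<Sum>i=1..m. (y i - y (i - 1)) * (\<Sum>j=i..m. a j)) + (\<Sum>i=1..Suc m. (y i - y (i - 1))) * a (Suc m)"
      by (simp add: sum.distrib sum_distrib_right distrib_right)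
    finally show ?thesis .
  qed
  have "(\<Sum>j=0..Suc m. y j * a j) = (\<Sum>j=0..m. y j * a j) + y (Suc m) * a (Suc m)" by simp
  also have "\<dots> = y 0 * (\<Sum>j=0..Suc m. a j) + (\<Sum>i=1..Suc m. (y i - y (i - 1)) * (\<Sum>j=i..Suc m. a j))"
    unfolding s tele Suc.IH by (simp add: algebra_simps)
  finally show ?case .
qed

lemma mono_xh: assumes "\<forall>i<n. xh i < (xh (Suc i)::real)" "i < j" "j \<le> n" shows "xh i < xh j"
  using assms(2,3)
proof (induction j)
  case 0 then show ?case by simp
next
  case (Suc j)
  then show ?case using assms(1) by (metis less_Suc_eq less_trans Suc_le_lessD less_imp_le_nat)
qed

definition Lp :: "nat \<Rightarrow> (nat \<Rightarrow> real) \<Rightarrow> nat \<Rightarrow> real poly" where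
  "Lp n xh j = (\<Prod>i\<in>{0..n} - {j}. smult (1 / (xh j - xh i)) [:- xh i, 1:])"

lemma poly_Lp: "poly (Lp n xh j) t = lagr n xh j t"
  unfolding Lp_def lagr_def poly_prod by (intro prod.cong) (auto simp: diff_divide_distrib)

lemma degree_Lp: assumes "j \<le> n" shows "degree (Lp n xh j) \<le> n"
proof -
  have "degree (Lp n xh j) \<le> sum (degree \<circ> (\<lambda>i. smult (1 / (xh j - xh i)) [:- xh i, 1:])) ({0..n} - {j})"
    unfolding Lp_def by (rule degree_prod_sum_le) auto
  also have "\<dots> \<le> sum (\<lambda>i. 1) ({0..n} - {j})"
    by (intro sum_mono) auto
  also have "\<dots> \<le> n" by (use assms in \<open>auto simp: card_Diff_singleton\<close>)
  finally show ?thesis .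
qed

lemma lagr_node:
  assumes inj: "inj_on xh {0..n}" and j: "j \<le> n" and m: "m \<le> n"
  shows "lagr n xh j (xh m) = (if m = j then 1 else 0)"
proof (cases "m = j")
  case True
  have "lagr n xh j (xh m) = (\<Prod>i\<in>{0..n} - {j}. 1)" unfolding lagr_def
    using True inj j by (intro prod.cong) (auto simp: inj_on_def)
  then show ?thesis using True by simp
next
  case False
  have "lagr n xh j (xh m) = 0" unfolding lagr_def
    by (rule prod_zero) (use False m in auto)
  then show ?thesis using False by simp
qed

lemma lagr_sum:
  assumes inj: "inj_on xh {0..n}"
  shows "(\<Sum>j=0..n. lagr n xh j t) = 1"
proof -
  have "(\<Sum>j=0..n. Lp n xh j) = 1"
  proof (rule poly_eqI_degree[where A = "xh ` {0..n}"])
    fix u assume "u \<in> xh ` {0..n}"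
    then obtain m where m: "m \<le> n" "u = xh m" by auto
    have "poly (\<Sum>j=0..n. Lp n xh j) u = (\<Sum>j=0..n. if m = j then 1 else 0)"
      unfolding poly_sum poly_Lp using m inj by (intro sum.cong) (auto simp: lagr_node)
    also have "\<dots> = 1" using m by simp
    finally show "poly (\<Sum>j=0..n. Lp n xh j) u = poly 1 u" by simp
  next
    have c: "card (xh ` {0..n}) = Suc n" using inj by (simp add: card_image)
    show "degree (\<Sum>j=0..n. Lp n xh j) < card (xh ` {0..n})"
      unfolding c by (rule le_imp_less_Suc, rule degree_sum_le) (auto intro!: degree_Lp)
    show "degree (1::real poly) < card (xh ` {0..n})" unfolding c by simp
  qed
  then have "poly (\<Sum>j=0..n. Lp n xh j) t = 1" by simp
  then show ?thesis unfolding poly_sum poly_Lp .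
qed


theorem lemma4:
  fixes n :: nat and x xh y :: "nat \<Rightarrow> real" and L :: real and k :: nat
  assumes x_incr: "\<forall>i<n. x i < x (Suc i)"
    and xh_incr: "\<forall>i<n. xh i < xh (Suc i)"
    and first: "xh 0 = x 0" and last: "xh n = x n"
    and L: "L \<ge> 0"
    and lip: "\<forall>j\<in>{1..n}. \<bar>y j - y (j - 1)\<bar> \<le> L * (xh j - xh (j - 1))"
    and k: "1 \<le> k" "k \<le> n"
  shows "let z = zz n x xh;
             c = (xh (k - 1) + xh k) / 2;
             a = (\<lambda>j. (z j - Pint n xh z c) * lagr n xh j c)
         in \<bar>Eint n xh c y z\<bar> \<le> L * (\<Sum>i=1..n. (xh i - xh (i - 1)) * \<bar>\<Sum>j=i..n. a j\<bar>)"
proof -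
  define z where "z = zz n x xh"
  define c where "c = (xh (k - 1) + xh k) / 2"
  define a where "a = (\<lambda>j. (z j - Pint n xh z c) * lagr n xh j c)"
  have inj: "inj_on xh {0..n}"
  proof (rule inj_onI)
    fix i j assume "i \<in> {0..n}" "j \<in> {0..n}" "xh i = xh j"
    then show "i = j" using mono_xh[OF xh_incr, of i j] mono_xh[OF xh_incr, of j i]
      by (metis atLeastAtMost_iff less_irrefl linorder_neqE_nat)
  qed
  have ls: "(\<Sum>j=0..n. lagr n xh j c) = 1" by (rule lagr_sum[OF inj])
  have E: "Eint n xh c y z = (\<Sum>j=0..n. y j * a j)"
  proof -
    have "Eint n xh c y z = (\<Sum>j=0..n. y j * z j * lagr n xh j c) - (\<Sum>j=0..n. y j * lagr n xh j c * Pint n xh z c)"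
      unfolding Eint_def by (simp add: Pint_def sum_distrib_right)
    also have "\<dots> = (\<Sum>j=0..n. y j * a j)"
      unfolding a_def sum_subtractf[symmetric] by (intro sum.cong) (auto simp: algebra_simps)
    finally show ?thesis .
  qed
  have sa: "(\<Sum>j=0..n. a j) = 0"
  proof -
    have "(\<Sum>j=0..n. a j) = Pint n xh z c - Pint n xh z c * (\<Sum>j=0..n. lagr n xh j c)"
    proof -
      have "(\<Sum>j=0..n. a j) = (\<Sum>j=0..n. z j * lagr n xh j c - Pint n xh z c * lagr n xh j c)"
        unfolding a_def by (intro sum.cong) (auto simp: algebra_simps)
      also have "\<dots> = Pint n xh z c - Pint n xh z c * (\<Sum>j=0..n. lagr n xh j c)"
        unfolding sum_subtractf sum_distrib_left[symmetric] Pint_def ..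
      finally show ?thesis .
    qed
    then show ?thesis using ls by simp
  qed
  have "\<bar>Eint n xh c y z\<bar> = \<bar>\<Sum>i=1..n. (y i - y (i - 1)) * (\<Sum>j=i..n. a j)\<bar>"
    unfolding E abel sa by simp
  also have "\<dots> \<le> (\<Sum>i=1..n. \<bar>(y i - y (i - 1)) * (\<Sum>j=i..n. a j)\<bar>)" by (rule sum_abs)
  also have "\<dots> \<le> (\<Sum>i=1..n. L * ((xh i - xh (i - 1)) * \<bar>\<Sum>j=i..n. a j\<bar>))"
  proof (rule sum_mono)
    fix i assume i: "i \<in> {1..n}"
    have "\<bar>(y i - y (i - 1)) * (\<Sum>j=i..n. a j)\<bar> = \<bar>y i - y (i - 1)\<bar> * \<bar>\<Sum>j=i..n. a j\<bar>"
      by (simp add: abs_mult)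
    also have "\<dots> \<le> L * (xh i - xh (i - 1)) * \<bar>\<Sum>j=i..n. a j\<bar>"
      using lip i by (intro mult_right_mono) auto
    finally show "\<bar>(y i - y (i - 1)) * (\<Sum>j=i..n. a j)\<bar> \<le> L * ((xh i - xh (i - 1)) * \<bar>\<Sum>j=i..n. a j\<bar>)"
      by (simp add: mult.assoc)
  qed
  also have "\<dots> = L * (\<Sum>i=1..n. (xh i - xh (i - 1)) * \<bar>\<Sum>j=i..n. a j\<bar>)"
    by (simp add: sum_distrib_left)
  finally show ?thesis unfolding Let_def z_def[symmetric] c_def[symmetric] a_def[symmetric] .
qed

end
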